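(* Let $M$ be a finite abelian group of exponent greater than $2$, and let $\mathrm{Half}(L_M)$ be the group of half-automorphisms of $L_M$. Then $$\mathrm{Half}(L_M)=\{F^+_{(f',f'',u,v)},\,F^-_{(f',f'',u,v)} : f'\in\mathrm{Aut}(K),\ f''\in\mathrm{Aut}(M),\ u,v\in M,\ u^2=v^2=1\}.$$ Moreover: (a) if $|M|$ is odd, then $|\mathrm{Half}(L_M)|=2\,|\mathrm{Aut}(K)|\,|\mathrm{Aut}(M)|$; (b) if $|M|$ is even and $M=C_{2i_1}\times\cdots\times C_{2i_s}\times M_1$ with $|M_1|$ odd, $s\geq1$, $i_j\geq 1$, then $|\mathrm{Half}(L_M)|=2^{2s+1}\,|\mathrm{Aut}(K)|\,|\mathrm{Aut}(M)|$.
   Context: $C_n$ denotes the cyclic group of order $n$. Let $K=\{1,a,b,c\}$ be the Klein four-group. Set $L_M=K\times M$ with the operation $(A,x)*(B,y)=(AB,xy)$ if $B=1$, and $(A,x)*(B,y)=(AB,x^{-1}y)$ if $B\neq 1$. For $u,v\in M$ with $u^2=v^2=1$, $\alpha_{(u,v)}:K\to M$ is defined by $\alpha_{(u,v)}(1)=1$, $\alpha_{(u,v)}(a)=u$, $\alpha_{(u,v)}(b)=v$, $\alpha_{(u,v)}(c)=uv$. For $f'\in\mathrm{Aut}(K)$, $f''\in\mathrm{Aut}(M)$ define $F^+_{(f',f'',u,v)}(A,x)=(f'(A),f''(x)\alpha_{(u,v)}(A))$ for all $(A,x)$, and $F^-_{(f',f'',u,v)}(1,x)=(1,f''(x))$,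 $F^-_{(f',f'',u,v)}(A,x)=(f'(A),f''(x^{-1})\alpha_{(u,v)}(A))$ for $A\neq 1$. A half-automorphism of a loop $L$ is a bijection $f:L\to L$ with $f(XY)\in\{f(X)f(Y),f(Y)f(X)\}$ for all $X,Y\in L$. *)

theory Defs
  imports "HOL-Algebra.Algebra"
begin

definition kone :: "bool \<times> bool" where "kone = (False, False)"
definition ka :: "bool \<times> bool" where "ka = (True, False)"
definition kb :: "bool \<times> bool" where "kb = (False, True)"
definition kc :: "bool \<times> bool" where "kc = (True, True)"

definition kmult :: "bool \<times> bool \<Rightarrow> bool \<times> bool \<Rightarrow> bool \<times> bool" where
  "kmult A B = (fst A \<noteq> fst B, snd A \<noteq> snd B)"

definition klein :: "(bool \<times> bool) monoid" where
  "klein = \<lparr>carrier = UNIV, monoid.mult = kmult, one = kone\<rparr>"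

definition Aut :: "('a, 'b) monoid_scheme \<Rightarrow> ('a \<Rightarrow> 'a) set" where
  "Aut G = {f. f \<in> iso G G \<and> f \<in> extensional (carrier G)}"

definition group_exponent :: "('a, 'b) monoid_scheme \<Rightarrow> nat" where
  "group_exponent G = (LEAST n. 0 < n \<and> (\<forall>x\<in>carrier G. x [^]\<^bsub>G\<^esub> n = \<one>\<^bsub>G\<^esub>))"

definition LM :: "('a, 'b) monoid_scheme \<Rightarrow> ((bool \<times> bool) \<times> 'a) monoid" where
  "LM M = \<lparr>carrier = UNIV \<times> carrier M,
           monoid.mult = (\<lambda>(A, x) (B, y). if B = kone then (kmult A B, x \<otimes>\<^bsub>M\<^esub> y)
                                    else (kmult A B, inv\<^bsub>M\<^esub> x \<otimes>\<^bsub>M\<^esub> y)),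
           one = (kone, \<one>\<^bsub>M\<^esub>)\<rparr>"

definition half_aut :: "('a, 'b) monoid_scheme \<Rightarrow> ('a \<Rightarrow> 'a) \<Rightarrow> bool" where
  "half_aut L f \<longleftrightarrow> bij_betw f (carrier L) (carrier L) \<and>
     (\<forall>P\<in>carrier L. \<forall>Q\<in>carrier L.
        f (P \<otimes>\<^bsub>L\<^esub> Q) \<in> {f P \<otimes>\<^bsub>L\<^esub> f Q, f Q \<otimes>\<^bsub>L\<^esub> f P})"

definition Half :: "('a, 'b) monoid_scheme \<Rightarrow> ('a \<Rightarrow> 'a) set" where
  "Half L = {f. half_aut L f \<and> f \<in> extensional (carrier L)}"

definition alpha :: "('a, 'b) monoid_scheme \<Rightarrow> 'a \<Rightarrow> 'a \<Rightarrow> bool \<times> bool \<Rightarrow> 'a" where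
  "alpha M u v A = (if A = kone then \<one>\<^bsub>M\<^esub> else if A = ka then u else if A = kb then v
                    else u \<otimes>\<^bsub>M\<^esub> v)"

definition Fplus :: "('a, 'b) monoid_scheme \<Rightarrow> (bool \<times> bool \<Rightarrow> bool \<times> bool) \<Rightarrow> ('a \<Rightarrow> 'a)
     \<Rightarrow> 'a \<Rightarrow> 'a \<Rightarrow> (bool \<times> bool) \<times> 'a \<Rightarrow> (bool \<times> bool) \<times> 'a" where
  "Fplus M f' f'' u v = restrict (\<lambda>(A, x). (f' A, f'' x \<otimes>\<^bsub>M\<^esub> alpha M u v A)) (carrier (LM M))"

definition Fminus :: "('a, 'b) monoid_scheme \<Rightarrow> (bool \<times> bool \<Rightarrow> bool \<times> bool) \<Rightarrow> ('a \<Rightarrow> 'a)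
     \<Rightarrow> 'a \<Rightarrow> 'a \<Rightarrow> (bool \<times> bool) \<times> 'a \<Rightarrow> (bool \<times> bool) \<times> 'a" where
  "Fminus M f' f'' u v = restrict (\<lambda>(A, x). if A = kone then (kone, f'' x)
         else (f' A, f'' (inv\<^bsub>M\<^esub> x) \<otimes>\<^bsub>M\<^esub> alpha M u v A)) (carrier (LM M))"

end

theory Submission
  imports Defs
begin



lemma K_cases: "A = kone \<or> A = ka \<or> A = kb \<or> A = kc"
  by (cases A) (auto simp: kone_def ka_def kb_def kc_def)

lemma kmult_simps[simp]:
  "kmult A kone = A" "kmult kone A = A" "kmult A A = kone"
  "kmult ka kb = kc" "kmult kb ka = kc" "kmult ka kc = kb" "kmult kc ka = kb"
  "kmult kb kc = ka" "kmult kc kb = ka"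
  by (auto simp: kmult_def kone_def ka_def kb_def kc_def)

lemma kmult_comm: "kmult A B = kmult B A" by (auto simp: kmult_def)
lemma kmult_eq_kone: "kmult A B = kone \<longleftrightarrow> A = B"
  by (cases A; cases B) (auto simp: kmult_def kone_def)
lemma kdistinct[simp]: "ka \<noteq> kone" "kb \<noteq> kone" "kc \<noteq> kone" "ka \<noteq> kb" "ka \<noteq> kc" "kb \<noteq> kc"
  "kone \<noteq> ka" "kone \<noteq> kb" "kone \<noteq> kc" "kb \<noteq> ka" "kc \<noteq> ka" "kc \<noteq> kb"
  by (auto simp: kone_def ka_def kb_def kc_def)

locale hlm = comm_group M for M :: "('a,'b) monoid_scheme" (structure)
begin

lemma LM_mult: "(A,x) \<otimes>\<^bsub>LM M\<^esub> (B,y) = (if B = kone then (kmult A B, x \<otimes> y) else (kmult A B, inv x \<otimes> y))"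
  by (simp add: LM_def)

lemma LM_carrier: "carrier (LM M) = UNIV \<times> carrier M" by (simp add: LM_def)

lemma alpha_simps[simp]: "alpha M u v kone = \<one>" "alpha M u v ka = u" "alpha M u v kb = v" "alpha M u v kc = u \<otimes> v"
  by (auto simp: alpha_def)

lemma A1: "a \<in> carrier M \<Longrightarrow> b \<in> carrier M \<Longrightarrow> c \<in> carrier M \<Longrightarrow> inv (c \<otimes> a) \<otimes> (c \<otimes> b) = inv a \<otimes> b"
  by (smt (verit, best) inv_closed inv_mult inv_solve_right m_assoc m_closed m_comm)
lemma A2: "a \<in> carrier M \<Longrightarrow> b \<in> carrier M \<Longrightarrow> inv a \<otimes> b = a \<otimes> b \<Longrightarrow> a \<otimes> a = \<one>"
  by (metis inv_closed l_inv r_cancel)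
lemma A3: "a \<in> carrier M \<Longrightarrow> b \<in> carrier M \<Longrightarrow> inv a \<otimes> b = inv b \<otimes> inv a \<Longrightarrow> b \<otimes> b = \<one>"
  by (metis inv_closed l_inv m_comm r_cancel)
lemma A4: "a \<in> carrier M \<Longrightarrow> a \<otimes> a = \<one> \<longleftrightarrow> inv a = a"
  by (metis inv_closed inv_unique r_inv)
lemma A5: "a \<in> carrier M \<Longrightarrow> b \<in> carrier M \<Longrightarrow> inv (inv a \<otimes> b) = inv b \<otimes> a"
  by (simp add: inv_mult m_comm)
lemma A6: "a \<in> carrier M \<Longrightarrow> c \<in> carrier M \<Longrightarrow> (c \<otimes> a) \<otimes> (c \<otimes> inv a) = c \<otimes> c"
  by (metis inv_closed inv_solve_right m_closed m_lcomm)
lemma A10: "x \<in> carrier M \<Longrightarrow> z \<in> carrier M \<Longrightarrow> x \<otimes> x = \<one> \<Longrightarrow> (x \<otimes> z) \<otimes> (x \<otimes> z) = z \<otimes> z"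
  by (metis m_assoc m_closed m_comm r_one)
lemma A11: "z \<in> carrier M \<Longrightarrow> inv z \<otimes> inv z = \<one> \<Longrightarrow> z \<otimes> z = \<one>"
  by (metis l_inv inv_closed inv_unique)
lemma A12: "w \<in> carrier M \<Longrightarrow> w = w \<otimes> w \<Longrightarrow> w = \<one>"
  by simp
lemma sq_mult: "a \<in> carrier M \<Longrightarrow> b \<in> carrier M \<Longrightarrow> (a \<otimes> b) \<otimes> (a \<otimes> b) = (a \<otimes> a) \<otimes> (b \<otimes> b)"
  by (simp add: m_ac)
lemma A8: assumes "a \<in> carrier M" "b \<in> carrier M" "p \<in> carrier M" "a \<otimes> a = \<one>"
   "inv (a \<otimes> p) \<otimes> (b \<otimes> inv p) = a \<otimes> b" shows "p \<otimes> p = \<one>"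
proof -
  have ia: "inv a = a" using A4 assms by blast
  have "inv (a \<otimes> p) \<otimes> (b \<otimes> inv p) = (a \<otimes> b) \<otimes> (inv p \<otimes> inv p)"
    using assms ia by (simp add: inv_mult m_ac)
  then have "(a \<otimes> b) \<otimes> (inv p \<otimes> inv p) = (a \<otimes> b) \<otimes> \<one>" using assms by simp
  then have "inv p \<otimes> inv p = \<one>" using assms by (metis inv_closed l_cancel m_closed one_closed)
  then show ?thesis using A11 assms by blast
qed
lemma A9: assumes "a \<in> carrier M" "b \<in> carrier M" "p \<in> carrier M" "b \<otimes> b = \<one>"
   "inv (b \<otimes> inv p) \<otimes> (a \<otimes> p) = a \<otimes> b" shows "p \<otimes> p = \<one>"
proof -
  have ib: "inv b = b" using A4 assms by blast
  have "inv (b \<otimes> inv p) \<otimes> (a \<otimes> p) = (a \<otimes> b) \<otimes> (p \<otimes> p)"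
    using assms ib by (simp add: inv_mult m_ac)
  then have "(a \<otimes> b) \<otimes> (p \<otimes> p) = (a \<otimes> b) \<otimes> \<one>" using assms by simp
  then show "p \<otimes> p = \<one>" using assms by (metis l_cancel m_closed one_closed)
qed
lemma A7: "R \<in> carrier M \<Longrightarrow> (a = R \<or> a = inv R) \<Longrightarrow> (b = R \<or> b = inv R) \<Longrightarrow> a \<noteq> b \<Longrightarrow> a \<otimes> b = \<one>"
  by auto
end

lemma fst_LM_mult: "fst (P \<otimes>\<^bsub>LM M\<^esub> Q) = kmult (fst P) (fst Q)"
  by (cases P; cases Q) (simp add: LM_def)

context hlm begin

lemma half_cases:
  assumes fH: "f \<in> Half (LM M)" and z: "z \<in> carrier M" "z \<otimes> z \<noteq> \<one>"
  shows "\<exists>f' f'' u v. f' \<in> Aut klein \<and> f'' \<in> Aut M \<and> u \<in> carrier M \<and> v \<in> carrier M \<and>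
     u \<otimes> u = \<one> \<and> v \<otimes> v = \<one> \<and> (f = Fplus M f' f'' u v \<or> f = Fminus M f' f'' u v)"
proof -
  let ?L = "LM M"
  have bij: "bij_betw f (carrier ?L) (carrier ?L)"
    and hf0: "\<And>P Q. P \<in> carrier ?L \<Longrightarrow> Q \<in> carrier ?L \<Longrightarrow> f (P \<otimes>\<^bsub>?L\<^esub> Q) \<in> {f P \<otimes>\<^bsub>?L\<^esub> f Q, f Q \<otimes>\<^bsub>?L\<^esub> f P}"
    and ext: "f \<in> extensional (carrier ?L)"
    using fH by (auto simp: Half_def half_aut_def)
  have hf: "\<And>A x B y. x \<in> carrier M \<Longrightarrow> y \<in> carrier M \<Longrightarrow>
      f ((A,x) \<otimes>\<^bsub>?L\<^esub> (B,y)) = f (A,x) \<otimes>\<^bsub>?L\<^esub> f (B,y) \<or> f ((A,x) \<otimes>\<^bsub>?L\<^esub> (B,y)) = f (B,y) \<otimes>\<^bsub>?L\<^esub> f (A,x)"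
    using hf0 by (simp add: LM_carrier)
  have inC: "snd (f (A,x)) \<in> carrier M" if "x \<in> carrier M" for A x
  proof -
    have "f (A,x) \<in> f ` carrier ?L" using that by (simp add: LM_carrier)
    then have "f (A,x) \<in> UNIV \<times> carrier M" using bij by (simp add: bij_betw_def LM_carrier)
    then show ?thesis by (simp add: mem_Times_iff)
  qed
  have injf: "A = B \<and> x = y" if "x \<in> carrier M" "y \<in> carrier M" "f (A,x) = f (B,y)" for A x B y
  proof -
    have "inj_on f (carrier ?L)" using bij by (simp add: bij_betw_def)
    from inj_onD[OF this that(3)] that show ?thesis by (simp add: LM_carrier)
  qed
  have surjf: "\<And>B y. y \<in> carrier M \<Longrightarrow> \<exists>A x. x \<in> carrier M \<and> f (A,x) = (B,y)"
  proof -
    fix B y assume "y \<in> carrier M"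
    then have "(B,y) \<in> f ` carrier ?L" using bij by (simp add: bij_betw_def LM_carrier)
    then obtain P where P: "P \<in> carrier ?L" "(B,y) = f P" by blast
    show "\<exists>A x. x \<in> carrier M \<and> f (A,x) = (B,y)"
      by (rule exI[of _ "fst P"], rule exI[of _ "snd P"]) (use P in \<open>auto simp: LM_carrier mem_Times_iff\<close>)
  qed
  have fstmul: "\<And>A x B y. x \<in> carrier M \<Longrightarrow> y \<in> carrier M \<Longrightarrow>
      fst (f ((A,x) \<otimes>\<^bsub>?L\<^esub> (B,y))) = kmult (fst (f (A,x))) (fst (f (B,y)))"
    using hf by (metis fst_LM_mult kmult_comm)
  have pairf: "\<And>P. f P = (fst (f P), snd (f P))" by simp
  have f1: "f (kone, \<one>) = (kone, \<one>)"
  proof -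
    obtain A w where Aw: "f (kone, \<one>) = (A, w)" by fastforce
    have wC: "w \<in> carrier M" using inC[of \<one> kone] Aw by simp
    have "(kone, \<one>) \<otimes>\<^bsub>?L\<^esub> (kone, \<one>) = (kone, \<one>)" by (simp add: LM_mult)
    then have "f (kone, \<one>) = f (kone,\<one>) \<otimes>\<^bsub>?L\<^esub> f (kone, \<one>)" using hf[of \<one> \<one> kone kone] by auto
    then have e: "(A,w) = (A,w) \<otimes>\<^bsub>?L\<^esub> (A,w)" using Aw by simp
    show ?thesis
    proof (cases "A = kone")
      case True
      then have "w = w \<otimes> w" using e by (simp add: LM_mult)
      then show ?thesis using Aw True wC by simp
    next
      case False
      then show ?thesis using e wC by (simp add: LM_mult)
    qed
  qed
  have sq: "\<And>A x. x \<in> carrier M \<Longrightarrow> (A,x) \<otimes>\<^bsub>?L\<^esub> (A,x) = (kone, if A = kone then x \<otimes> x else \<one>)"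
    by (simp add: LM_mult)
  have fsq: "\<And>A x. x \<in> carrier M \<Longrightarrow> f ((A,x) \<otimes>\<^bsub>?L\<^esub> (A,x)) = f (A,x) \<otimes>\<^bsub>?L\<^esub> f (A,x)"
    using hf by blast
  have g1: "fst (f (kone,x)) = kone" if x: "x \<in> carrier M" "x \<otimes> x \<noteq> \<one>" for x
  proof (rule ccontr)
    assume ne: "fst (f (kone,x)) \<noteq> kone"
    have "f (kone,x) \<otimes>\<^bsub>?L\<^esub> f (kone,x) = (kone, \<one>)"
      using sq[of "snd (f (kone,x))" "fst (f (kone,x))"] inC[OF x(1)] ne by simp
    moreover have "f (kone,x) \<otimes>\<^bsub>?L\<^esub> f (kone,x) = f (kone, x \<otimes> x)"
      using fsq[OF x(1), of kone] sq[OF x(1), of kone] by simp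
    ultimately have "f (kone, x \<otimes> x) = f (kone, \<one>)" using f1 by simp
    then have "x \<otimes> x = \<one>" using injf x by blast
    then show False using x by simp
  qed
  have g0: "fst (f (kone,x)) = kone" if x: "x \<in> carrier M" for x
  proof (cases "x \<otimes> x = \<one>")
    case False then show ?thesis using g1 x by blast
  next
    case True
    have e: "(kone, x \<otimes> z) \<otimes>\<^bsub>?L\<^esub> (kone, inv z) = (kone, x)"
      using x z by (simp add: LM_mult m_assoc)
    have a: "fst (f (kone, x \<otimes> z)) = kone"
    proof (rule g1)
      show "x \<otimes> z \<in> carrier M" using x z by simp
      show "(x \<otimes> z) \<otimes> (x \<otimes> z) \<noteq> \<one>" using A10[OF x z(1) True] z(2) by simp
    qed
    have b: "fst (f (kone, inv z)) = kone"
    proof (rule g1)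
      show "inv z \<in> carrier M" using z by simp
      show "inv z \<otimes> inv z \<noteq> \<one>" using A11 z by blast
    qed
    have "fst (f ((kone, x \<otimes> z) \<otimes>\<^bsub>?L\<^esub> (kone, inv z))) = kmult kone kone"
      using fstmul[of "x \<otimes> z" "inv z" kone kone] a b x z by (simp only: m_closed inv_closed)
    then show ?thesis using e by simp
  qed
  define g where "g A = fst (f (A, \<one>))" for A
  have gfst: "fst (f (A,x)) = g A" if x: "x \<in> carrier M" for A x
  proof -
    have "(A, \<one>) \<otimes>\<^bsub>?L\<^esub> (kone, x) = (A,x)" using x by (simp add: LM_mult)
    then show ?thesis using fstmul[of \<one> x A kone] g0[OF x] x by (simp add: g_def)
  qed
  have ghom: "g (kmult A B) = kmult (g A) (g B)" for A B
  proof -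
    have "(A, \<one>) \<otimes>\<^bsub>?L\<^esub> (B, \<one>) = (kmult A B, \<one>)" by (simp add: LM_mult)
    then show ?thesis using fstmul[of \<one> \<one> A B] by (simp add: g_def)
  qed
  have gsurj: "surj g"
  proof -
    have "C \<in> range g" for C
    proof -
      obtain A x where "x \<in> carrier M" "f (A,x) = (C, \<one>)" using surjf[of \<one> C] by auto
      then have "g A = C" using gfst by (metis fst_conv)
      then show ?thesis by auto
    qed
    then show ?thesis by auto
  qed
  have ginj: "inj g" using gsurj by (simp add: finite_UNIV_surj_inj)
  have gone: "g kone = kone" using ghom[of kone kone] by simp
  have gne: "g A \<noteq> kone" if "A \<noteq> kone" for A using ginj gone that by (metis injD)
  have gAut: "g \<in> Aut klein"
    unfolding Aut_def iso_def hom_def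
    using ginj gsurj ghom by (auto simp: klein_def bij_betw_def extensional_def)
  define \<phi> where "\<phi> = restrict (\<lambda>x. snd (f (kone, x))) (carrier M)"
  have fN: "f (kone, x) = (kone, \<phi> x)" if "x \<in> carrier M" for x
    using g0[OF that] that by (simp add: \<phi>_def prod_eq_iff)
  have \<phi>C: "\<phi> x \<in> carrier M" if "x \<in> carrier M" for x
    using inC[OF that] that by (simp add: \<phi>_def)
  have \<phi>hom: "\<phi> (x \<otimes> y) = \<phi> x \<otimes> \<phi> y" if "x \<in> carrier M" "y \<in> carrier M" for x y
  proof -
    have e: "(kone, x) \<otimes>\<^bsub>?L\<^esub> (kone, y) = (kone, x \<otimes> y)" by (simp add: LM_mult)
    have "f (kone, x \<otimes> y) = (kone, \<phi> x \<otimes> \<phi> y) \<or> f (kone, x \<otimes> y) = (kone, \<phi> y \<otimes> \<phi> x)"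
      using hf[OF that, of kone kone] e fN that by (simp add: LM_mult)
    then show ?thesis using fN[of "x \<otimes> y"] that \<phi>C m_comm by auto
  qed
  have \<phi>inj: "inj_on \<phi> (carrier M)"
    by (rule inj_onI) (metis fN injf)
  have \<phi>surj: "\<phi> ` carrier M = carrier M"
  proof
    show "\<phi> ` carrier M \<subseteq> carrier M" using \<phi>C by auto
    show "carrier M \<subseteq> \<phi> ` carrier M"
    proof
      fix y assume y: "y \<in> carrier M"
      obtain A x where Ax: "x \<in> carrier M" "f (A,x) = (kone, y)" using surjf[OF y] by blast
      have "g A = kone" using gfst[OF Ax(1), of A] Ax by simp
      then have "A = kone" using gne by blast
      then show "y \<in> \<phi> ` carrier M" using Ax fN by auto
    qed
  qed
  have \<phi>h: "\<phi> \<in> hom M M" using \<phi>C \<phi>hom by (auto simp: hom_def)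
  have \<phi>Aut: "\<phi> \<in> Aut M"
    using \<phi>h \<phi>inj \<phi>surj by (simp add: Aut_def iso_def bij_betw_def \<phi>_def)
  interpret \<phi>: group_hom M M \<phi>
    using \<phi>h by (simp add: group_hom_def group_hom_axioms_def is_group)
  have \<phi>sq: "x \<otimes> x = \<one>" if "x \<in> carrier M" "\<phi> x \<otimes> \<phi> x = \<one>" for x
  proof -
    have "\<phi> (x \<otimes> x) = \<phi> \<one>" using that \<phi>hom by simp
    moreover have "x \<otimes> x \<in> carrier M" using that by simp
    ultimately show ?thesis using inj_onD[OF \<phi>inj] by blast
  qed
  have z\<phi>: "\<phi> z \<otimes> \<phi> z \<noteq> \<one>" using \<phi>sq z by blast
  have z\<phi>': "inv (\<phi> z) \<noteq> \<phi> z" using z\<phi> A4 \<phi>C z by blast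
  define h where "h A x = snd (f (A, x))" for A x
  define c where "c A = h A \<one>" for A
  have hC: "h A x \<in> carrier M" if "x \<in> carrier M" for A x using inC that by (simp add: h_def)
  have cC: "c A \<in> carrier M" for A using hC by (simp add: c_def)
  have fA: "f (A, x) = (g A, h A x)" if "x \<in> carrier M" for A x
    using gfst[OF that] by (simp add: h_def prod_eq_iff)
  have hopt: "h A x = c A \<otimes> \<phi> x \<or> h A x = c A \<otimes> inv (\<phi> x)" if "A \<noteq> kone" "x \<in> carrier M" for A x
  proof -
    have e: "(A, \<one>) \<otimes>\<^bsub>?L\<^esub> (kone, x) = (A, x)" using that by (simp add: LM_mult)
    have "f (A, x) = (g A, c A) \<otimes>\<^bsub>?L\<^esub> (kone, \<phi> x) \<or> f (A, x) = (kone, \<phi> x) \<otimes>\<^bsub>?L\<^esub> (g A, c A)"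
      using hf[of \<one> x A kone] e fA[of \<one> A] fN[of x] that by (simp add: c_def)
    then show ?thesis using fA[OF that(2)] gne[OF that(1)] that \<phi>C cC by (auto simp: LM_mult m_comm)
  qed
  have fprod: "f (A,x) \<otimes>\<^bsub>?L\<^esub> f (B,y) = (g (kmult A B), inv (h A x) \<otimes> h B y)"
    if "B \<noteq> kone" "x \<in> carrier M" "y \<in> carrier M" for A B x y
    using fA[OF that(2)] fA[OF that(3)] gne[OF that(1)] ghom by (simp add: LM_mult)
  have hcase: "h C w = inv (h A x) \<otimes> h B y \<or> h C w = inv (h B y) \<otimes> h A x"
    if "A \<noteq> kone" "B \<noteq> kone" "x \<in> carrier M" "y \<in> carrier M" "w \<in> carrier M"
       "(A,x) \<otimes>\<^bsub>?L\<^esub> (B,y) = (C,w)" for A B C x y w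
  proof -
    have "f (C,w) = f (A,x) \<otimes>\<^bsub>?L\<^esub> f (B,y) \<or> f (C,w) = f (B,y) \<otimes>\<^bsub>?L\<^esub> f (A,x)"
      using hf[OF that(3,4), of A B] that(6) by simp
    then show ?thesis using fprod[OF that(2,3,4)] fprod[OF that(1,4,3)] fA[OF that(5)]
      by auto
  qed
  define Pl where "Pl A \<longleftrightarrow> (\<forall>x\<in>carrier M. h A x = c A \<otimes> \<phi> x)" for A
  define Mi where "Mi A \<longleftrightarrow> (\<forall>x\<in>carrier M. h A x = c A \<otimes> inv (\<phi> x))" for A
  have excl: "\<not> (Pl A \<and> Mi A)" for A
  proof
    assume "Pl A \<and> Mi A"
    then have "c A \<otimes> \<phi> z = c A \<otimes> inv (\<phi> z)" using z by (auto simp: Pl_def Mi_def)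
    then have "\<phi> z = inv (\<phi> z)" using cC \<phi>C z by (metis inv_closed l_cancel)
    then show False using z\<phi>' by simp
  qed
  have PM: "Pl A \<or> Mi A" if A: "A \<noteq> kone" for A
  proof (rule ccontr)
    assume "\<not> (Pl A \<or> Mi A)"
    then obtain x y where x: "x \<in> carrier M" "h A x \<noteq> c A \<otimes> \<phi> x"
      and y: "y \<in> carrier M" "h A y \<noteq> c A \<otimes> inv (\<phi> y)" by (auto simp: Pl_def Mi_def)
    have hx: "h A x = c A \<otimes> inv (\<phi> x)" using hopt[OF A x(1)] x by auto
    have hy: "h A y = c A \<otimes> \<phi> y" using hopt[OF A y(1)] y by auto
    have e: "(A,x) \<otimes>\<^bsub>?L\<^esub> (A,y) = (kone, inv x \<otimes> y)" using A by (simp add: LM_mult)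
    have hk: "h kone (inv x \<otimes> y) = inv (\<phi> x) \<otimes> \<phi> y"
      using fN[of "inv x \<otimes> y"] x y \<phi>hom by (simp add: h_def)
    have xyC: "inv x \<otimes> y \<in> carrier M" using x y by simp
    from hcase[OF A A x(1) y(1) xyC e] hk
    have "inv (\<phi> x) \<otimes> \<phi> y = inv (h A x) \<otimes> h A y \<or> inv (\<phi> x) \<otimes> \<phi> y = inv (h A y) \<otimes> h A x"
      by simp
    then show False
    proof
      assume a: "inv (\<phi> x) \<otimes> \<phi> y = inv (h A x) \<otimes> h A y"
      have "inv (h A x) \<otimes> h A y = \<phi> x \<otimes> \<phi> y"
        using hx hy A1 cC \<phi>C x y by simp
      then have "\<phi> x \<otimes> \<phi> x = \<one>" using A2[of "\<phi> x" "\<phi> y"] a \<phi>C x y by simp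
      then have "inv (\<phi> x) = \<phi> x" using A4 \<phi>C x by blast
      then show False using hx x by simp
    next
      assume a: "inv (\<phi> x) \<otimes> \<phi> y = inv (h A y) \<otimes> h A x"
      have "inv (h A y) \<otimes> h A x = inv (\<phi> y) \<otimes> inv (\<phi> x)"
        using hx hy A1 cC \<phi>C x y by simp
      then have "\<phi> y \<otimes> \<phi> y = \<one>" using A3[of "\<phi> x" "\<phi> y"] a \<phi>C x y by simp
      then have "inv (\<phi> y) = \<phi> y" using A4 \<phi>C y by blast
      then show False using hy y by simp
    qed
  qed
  have zi: "inv z \<in> carrier M" using z by simp
  have cc: "c (kmult A B) \<otimes> c (kmult A B) = \<one>"
    if A: "A \<noteq> kone" and B: "B \<noteq> kone" and AB: "A \<noteq> B" for A B
  proof -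
    let ?C = "kmult A B"
    have C: "?C \<noteq> kone" using AB kmult_eq_kone by blast
    have e1: "(A,\<one>) \<otimes>\<^bsub>?L\<^esub> (B,z) = (?C, z)" using B z by (simp add: LM_mult)
    have e2: "(B,z) \<otimes>\<^bsub>?L\<^esub> (A,\<one>) = (?C, inv z)" using A z by (simp add: LM_mult kmult_comm)
    let ?R = "inv (c A) \<otimes> h B z"
    have RC: "?R \<in> carrier M" using cC hC z by simp
    have iR: "inv (h B z) \<otimes> c A = inv ?R" using A5 cC hC z by simp
    have h1: "h ?C z = ?R \<or> h ?C z = inv ?R"
      using hcase[OF A B one_closed z(1) z(1) e1] iR by (simp add: c_def)
    have h2: "h ?C (inv z) = ?R \<or> h ?C (inv z) = inv ?R"
      using hcase[OF B A z(1) one_closed zi e2] iR by (auto simp: c_def)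
    have dz: "c ?C \<otimes> \<phi> z \<noteq> c ?C \<otimes> inv (\<phi> z)" using z\<phi>' cC \<phi>C z by (metis inv_closed l_cancel)
    have pr: "h ?C z \<otimes> h ?C (inv z) = c ?C \<otimes> c ?C \<and> h ?C z \<noteq> h ?C (inv z)"
    proof (cases "Pl ?C")
      case True
      then have "h ?C z = c ?C \<otimes> \<phi> z" "h ?C (inv z) = c ?C \<otimes> inv (\<phi> z)"
        using z zi \<phi>.hom_inv[OF z(1)] by (auto simp: Pl_def)
      then show ?thesis using A6 cC \<phi>C z dz by auto
    next
      case False
      then have "Mi ?C" using PM C by blast
      then have "h ?C z = c ?C \<otimes> inv (\<phi> z)" "h ?C (inv z) = c ?C \<otimes> \<phi> z"
        using z zi \<phi>.hom_inv[OF z(1)] \<phi>C by (auto simp: Mi_def)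
      then show ?thesis using A6[of "\<phi> z" "c ?C"] cC \<phi>C z dz m_comm by auto
    qed
    then show ?thesis using A7[OF RC h1 h2] by simp
  qed
  have csq: "c C \<otimes> c C = \<one>" if C: "C \<noteq> kone" for C
  proof -
    have "C = ka \<or> C = kb \<or> C = kc" using K_cases C by blast
    then show ?thesis
    proof (elim disjE)
      assume "C = ka" then show ?thesis using cc[of kb kc] by simp
    next
      assume "C = kb" then show ?thesis using cc[of ka kc] by simp
    next
      assume "C = kc" then show ?thesis using cc[of ka kb] by simp
    qed
  qed
  have cprod: "c (kmult A B) = c A \<otimes> c B"
    if A: "A \<noteq> kone" and B: "B \<noteq> kone" and AB: "A \<noteq> B" for A B
  proof -
    have e: "(A,\<one>) \<otimes>\<^bsub>?L\<^esub> (B,\<one>) = (kmult A B, \<one>)" using B by (simp add: LM_mult)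
    have "c (kmult A B) = inv (c A) \<otimes> c B \<or> c (kmult A B) = inv (c B) \<otimes> c A"
      using hcase[OF A B one_closed one_closed one_closed e] by (simp add: c_def)
    moreover have "inv (c A) = c A" "inv (c B) = c B" using A4 cC csq A B by auto
    ultimately show ?thesis using m_comm cC by auto
  qed
  have unif: "Pl B" if A: "A \<noteq> kone" and B: "B \<noteq> kone" and AB: "A \<noteq> B" and PA: "Pl A" for A B
  proof (rule ccontr)
    assume "\<not> Pl B"
    then have MB: "Mi B" using PM B by blast
    have e: "(A,z) \<otimes>\<^bsub>?L\<^esub> (B,z) = (kmult A B, \<one>)" using B z by (simp add: LM_mult)
    have hA: "h A z = c A \<otimes> \<phi> z" using PA z by (simp add: Pl_def)
    have hB: "h B z = c B \<otimes> inv (\<phi> z)" using MB z by (simp add: Mi_def)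
    have "c A \<otimes> c B = inv (h A z) \<otimes> h B z \<or> c A \<otimes> c B = inv (h B z) \<otimes> h A z"
      using hcase[OF A B z(1) z(1) one_closed e] cprod[OF A B AB] by (simp add: c_def)
    then have "\<phi> z \<otimes> \<phi> z = \<one>"
    proof
      assume "c A \<otimes> c B = inv (h A z) \<otimes> h B z"
      then show ?thesis using A8[of "c A" "c B" "\<phi> z"] hA hB cC \<phi>C z csq[OF A] by simp
    next
      assume "c A \<otimes> c B = inv (h B z) \<otimes> h A z"
      then show ?thesis using A9[of "c A" "c B" "\<phi> z"] hA hB cC \<phi>C z csq[OF B] by simp
    qed
    then show False using z\<phi> by simp
  qed
  define u where "u = c ka"
  define v where "v = c kb"
  have uv: "u \<in> carrier M" "v \<in> carrier M" "u \<otimes> u = \<one>" "v \<otimes> v = \<one>"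
    using cC csq by (auto simp: u_def v_def)
  have ckc: "c kc = u \<otimes> v" using cprod[of ka kb] by (simp add: u_def v_def)
  have alc: "alpha M u v A = c A" if "A \<noteq> kone" for A
    using K_cases[of A] that ckc by (auto simp: u_def v_def)
  have hk: "h kone x = \<phi> x" if "x \<in> carrier M" for x using fN[OF that] by (simp add: h_def)
  have extF: "Fplus M g \<phi> u v \<in> extensional (carrier ?L)" "Fminus M g \<phi> u v \<in> extensional (carrier ?L)"
    by (simp_all add: Fplus_def Fminus_def)
  have "f = Fplus M g \<phi> u v \<or> f = Fminus M g \<phi> u v"
  proof (cases "Pl ka")
    case True
    have allP: "Pl A" if "A \<noteq> kone" for A
      using unif[of ka A] True that by (cases "A = ka") auto
    have "f = Fplus M g \<phi> u v"
    proof (rule extensionalityI[OF ext extF(1)])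
      fix P assume P: "P \<in> carrier ?L"
      obtain A x where Ax: "P = (A,x)" by fastforce
      have x: "x \<in> carrier M" using P Ax by (simp add: LM_carrier)
      show "f P = Fplus M g \<phi> u v P"
      proof (cases "A = kone")
        case True
        then show ?thesis using Ax x fA[OF x] hk \<phi>C gone P by (simp add: Fplus_def)
      next
        case False
        then show ?thesis using Ax x fA[OF x] allP[OF False] alc[OF False] \<phi>C cC P m_comm
          by (simp add: Fplus_def Pl_def)
      qed
    qed
    then show ?thesis ..
  next
    case False
    have allM: "Mi A" if "A \<noteq> kone" for A
    proof -
      have "\<not> Pl A" using unif[of A ka] False that by (cases "A = ka") auto
      then show ?thesis using PM that by blast
    qed
    have "f = Fminus M g \<phi> u v"
    proof (rule extensionalityI[OF ext extF(2)])
      fix P assume P: "P \<in> carrier ?L"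
      obtain A x where Ax: "P = (A,x)" by fastforce
      have x: "x \<in> carrier M" using P Ax by (simp add: LM_carrier)
      show "f P = Fminus M g \<phi> u v P"
      proof (cases "A = kone")
        case True
        then show ?thesis using Ax x fA[OF x] hk \<phi>C gone P by (simp add: Fminus_def)
      next
        case False
        then show ?thesis using Ax x fA[OF x] allM[OF False] alc[OF False] \<phi>C cC P m_comm
           \<phi>.hom_inv[OF x]
          by (simp add: Fminus_def Mi_def)
      qed
    qed
    then show ?thesis ..
  qed
  then show ?thesis using gAut \<phi>Aut uv by blast
qed

end


lemma Autk_hom: assumes "f \<in> Aut klein" shows "f (kmult A B) = kmult (f A) (f B)"
proof -
  have "\<forall>A B. f (kmult A B) = kmult (f A) (f B)" using assms by (simp add: Aut_def iso_def hom_def klein_def)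
  then show ?thesis by blast
qed
lemma Autk_inj: "f \<in> Aut klein \<Longrightarrow> inj f"
  by (auto simp: Aut_def iso_def bij_betw_def klein_def)
lemma Autk_one: "f \<in> Aut klein \<Longrightarrow> f kone = kone"
  using Autk_hom[of f kone kone] by simp
lemma Autk_ne: "f \<in> Aut klein \<Longrightarrow> A \<noteq> kone \<Longrightarrow> f A \<noteq> kone"
  by (metis Autk_inj Autk_one injD)

context hlm begin

lemma G1: "p \<in> carrier M \<Longrightarrow> q \<in> carrier M \<Longrightarrow> a \<in> carrier M \<Longrightarrow> b \<in> carrier M \<Longrightarrow> inv a = a \<Longrightarrow>
   inv (p \<otimes> a) \<otimes> (q \<otimes> b) = (inv p \<otimes> q) \<otimes> (a \<otimes> b)"
  by (simp add: inv_mult m_ac)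

lemma alpha_props:
  assumes "u \<in> carrier M" "v \<in> carrier M" "u \<otimes> u = \<one>" "v \<otimes> v = \<one>"
  shows "alpha M u v A \<in> carrier M" "alpha M u v A \<otimes> alpha M u v A = \<one>"
    "inv (alpha M u v A) = alpha M u v A"
    "alpha M u v (kmult A B) = alpha M u v A \<otimes> alpha M u v B"
proof -
  have uu: "u \<otimes> (u \<otimes> w) = w" "v \<otimes> (v \<otimes> w) = w" if "w \<in> carrier M" for w
    using assms that by (simp_all add: m_assoc[symmetric])
  show a1: "alpha M u v A \<in> carrier M" using assms by (auto simp: alpha_def)
  show a2: "alpha M u v A \<otimes> alpha M u v A = \<one>"
    using K_cases[of A] assms uu by (auto simp: m_ac)
  show "inv (alpha M u v A) = alpha M u v A" using A4 a1 a2 by blast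
  show "alpha M u v (kmult A B) = alpha M u v A \<otimes> alpha M u v B"
    using K_cases[of A] K_cases[of B] assms uu(1)[of v] uu(2)[of u] by (auto simp: m_ac)
qed


lemma Aut_gh: "f'' \<in> Aut M \<Longrightarrow> group_hom M M f''"
  by (simp add: Aut_def iso_def group_hom_def group_hom_axioms_def is_group)
lemma Aut_inj: "f'' \<in> Aut M \<Longrightarrow> inj_on f'' (carrier M)"
  by (simp add: Aut_def iso_def bij_betw_def)

lemma F_Half:
  assumes fin: "finite (carrier M)" and f': "f' \<in> Aut klein" and f'': "f'' \<in> Aut M"
    and uv: "u \<in> carrier M" "v \<in> carrier M" "u \<otimes> u = \<one>" "v \<otimes> v = \<one>"
  shows "Fplus M f' f'' u v \<in> Half (LM M)" "Fminus M f' f'' u v \<in> Half (LM M)"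
proof -
  let ?L = "LM M"
  let ?a = "alpha M u v"
  interpret H: group_hom M M f'' using Aut_gh[OF f''] .
  note al = alpha_props[OF uv]
  have finL: "finite (carrier ?L)" using fin by (simp add: LM_carrier)
  have f1: "f' kone = kone" using Autk_one[OF f'] .
  have fne: "f' A \<noteq> kone" if "A \<noteq> kone" for A using Autk_ne[OF f' that] .
  have fh: "f' (kmult A B) = kmult (f' A) (f' B)" for A B using Autk_hom[OF f'] .
  have finj: "inj f'" using Autk_inj[OF f'] .
  have hinj: "inj_on f'' (carrier M)" using Aut_inj[OF f''] .
  define Fp where "Fp = Fplus M f' f'' u v"
  define Fm where "Fm = Fminus M f' f'' u v"
  have Fp: "Fp (A,x) = (f' A, f'' x \<otimes> ?a A)" if "x \<in> carrier M" for A x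
    using that by (simp add: Fp_def Fplus_def LM_carrier)
  have Fm: "Fm (A,x) = (if A = kone then (kone, f'' x) else (f' A, inv (f'' x) \<otimes> ?a A))" if "x \<in> carrier M" for A x
    using that by (simp add: Fm_def Fminus_def LM_carrier)
  have bijI: "bij_betw F (carrier ?L) (carrier ?L)"
    if inj: "inj_on F (carrier ?L)" and sub: "\<And>P. P \<in> carrier ?L \<Longrightarrow> F P \<in> carrier ?L" for F
  proof -
    have "F ` carrier ?L \<subseteq> carrier ?L" using sub by auto
    then have "F ` carrier ?L = carrier ?L" using endo_inj_surj[OF finL _ inj] by blast
    then show ?thesis using inj by (simp add: bij_betw_def)
  qed
  have "bij_betw Fp (carrier ?L) (carrier ?L)"
  proof (rule bijI)
    show "inj_on Fp (carrier ?L)"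
    proof (rule inj_onI)
      fix P Q assume P: "P \<in> carrier ?L" and Q: "Q \<in> carrier ?L" and e: "Fp P = Fp Q"
      obtain A x where Ax: "P = (A,x)" by fastforce
      obtain B y where By: "Q = (B,y)" by fastforce
      have x: "x \<in> carrier M" and y: "y \<in> carrier M" using P Q Ax By by (auto simp: LM_carrier)
      have "f' A = f' B" using e Fp x y Ax By by simp
      then have AB: "A = B" using finj by (simp add: inj_eq)
      have "f'' x \<otimes> ?a A = f'' y \<otimes> ?a A" using e Fp x y Ax By AB by simp
      then have "f'' x = f'' y" using al x y by (metis H.hom_closed r_cancel)
      then have "x = y" using hinj x y by (simp add: inj_on_def)
      then show "P = Q" using Ax By AB by simp
    qed
    show "Fp P \<in> carrier ?L" if "P \<in> carrier ?L" for P
      using that al Fp by (cases P) (auto simp: LM_carrier)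
  qed
  moreover have "Fp (P \<otimes>\<^bsub>?L\<^esub> Q) \<in> {Fp P \<otimes>\<^bsub>?L\<^esub> Fp Q, Fp Q \<otimes>\<^bsub>?L\<^esub> Fp P}"
    if P: "P \<in> carrier ?L" and Q: "Q \<in> carrier ?L" for P Q
  proof -
    obtain A x where Ax: "P = (A,x)" by fastforce
    obtain B y where By: "Q = (B,y)" by fastforce
    have x: "x \<in> carrier M" and y: "y \<in> carrier M" using P Q Ax By by (auto simp: LM_carrier)
    have "Fp ((A,x) \<otimes>\<^bsub>?L\<^esub> (B,y)) = Fp (A,x) \<otimes>\<^bsub>?L\<^esub> Fp (B,y)"
    proof (cases "B = kone")
      case True
      then show ?thesis using x y al Fp f1 by (simp add: LM_mult m_ac)
    next
      case False
      have "Fp ((A,x) \<otimes>\<^bsub>?L\<^esub> (B,y)) = (f' (kmult A B), f'' (inv x \<otimes> y) \<otimes> ?a (kmult A B))"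
        using False x y Fp by (simp add: LM_mult)
      also have "\<dots> = (kmult (f' A) (f' B), (inv (f'' x) \<otimes> f'' y) \<otimes> (?a A \<otimes> ?a B))"
        using x y al fh by simp
      also have "\<dots> = Fp (A,x) \<otimes>\<^bsub>?L\<^esub> Fp (B,y)"
        using False fne[OF False] x y Fp al G1[of "f'' x" "f'' y" "?a A" "?a B"] by (simp add: LM_mult)
      finally show ?thesis .
    qed
    then show ?thesis using Ax By by simp
  qed
  ultimately show "Fplus M f' f'' u v \<in> Half (LM M)"
    unfolding Half_def half_aut_def Fp_def by (simp add: Fplus_def)
  have "bij_betw Fm (carrier ?L) (carrier ?L)"
  proof (rule bijI)
    show "inj_on Fm (carrier ?L)"
    proof (rule inj_onI)
      fix P Q assume P: "P \<in> carrier ?L" and Q: "Q \<in> carrier ?L" and e: "Fm P = Fm Q"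
      obtain A x where Ax: "P = (A,x)" by fastforce
      obtain B y where By: "Q = (B,y)" by fastforce
      have x: "x \<in> carrier M" and y: "y \<in> carrier M" using P Q Ax By by (auto simp: LM_carrier)
      have AB: "A = B"
      proof (cases "A = kone"; cases "B = kone")
        assume "A \<noteq> kone" "B \<noteq> kone"
        then have "f' A = f' B" using e Fm x y Ax By by simp
        then show ?thesis using finj by (simp add: inj_eq)
      qed (use e Fm[OF x, of A] Fm[OF y, of B] Ax By fne[of A] fne[of B] in auto)
      have "f'' x = f'' y"
      proof (cases "A = kone")
        case True then show ?thesis using e Fm x y Ax By AB by simp
      next
        case False
        then have "inv (f'' x) \<otimes> ?a A = inv (f'' y) \<otimes> ?a A" using e Fm x y Ax By AB by simp
        then have "inv (f'' x) = inv (f'' y)" using al x y by (metis H.hom_closed inv_closed r_cancel)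
        then show ?thesis using x y by (metis H.hom_closed inv_inv)
      qed
      then have "x = y" using hinj x y by (simp add: inj_on_def)
      then show "P = Q" using Ax By AB by simp
    qed
    show "Fm P \<in> carrier ?L" if "P \<in> carrier ?L" for P
      using that al Fm by (cases P) (auto simp: LM_carrier)
  qed
  moreover have "Fm (P \<otimes>\<^bsub>?L\<^esub> Q) \<in> {Fm P \<otimes>\<^bsub>?L\<^esub> Fm Q, Fm Q \<otimes>\<^bsub>?L\<^esub> Fm P}"
    if P: "P \<in> carrier ?L" and Q: "Q \<in> carrier ?L" for P Q
  proof -
    obtain A x where Ax: "P = (A,x)" by fastforce
    obtain B y where By: "Q = (B,y)" by fastforce
    have x: "x \<in> carrier M" and y: "y \<in> carrier M" using P Q Ax By by (auto simp: LM_carrier)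
    have fx: "f'' x \<in> carrier M" and fy: "f'' y \<in> carrier M" using x y by auto
    have "Fm ((A,x) \<otimes>\<^bsub>?L\<^esub> (B,y)) \<in> {Fm (A,x) \<otimes>\<^bsub>?L\<^esub> Fm (B,y), Fm (B,y) \<otimes>\<^bsub>?L\<^esub> Fm (A,x)}"
    proof (cases "A = kone"; cases "B = kone")
      assume A: "A = kone" and B: "B = kone"
      then show ?thesis using x y Fm by (simp add: LM_mult)
    next
      assume A: "A = kone" and B: "B \<noteq> kone"
      have "Fm ((A,x) \<otimes>\<^bsub>?L\<^esub> (B,y)) = Fm (B,y) \<otimes>\<^bsub>?L\<^esub> Fm (A,x)"
        using A B x y Fm fne[OF B] al fx fy by (simp add: LM_mult inv_mult m_ac)
      then show ?thesis by simp
    next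
      assume A: "A \<noteq> kone" and B: "B = kone"
      have "Fm ((A,x) \<otimes>\<^bsub>?L\<^esub> (B,y)) = Fm (B,y) \<otimes>\<^bsub>?L\<^esub> Fm (A,x)"
        using A B x y Fm fne[OF A] al fx fy f1 by (simp add: LM_mult inv_mult m_ac)
      then show ?thesis by simp
    next
      assume A: "A \<noteq> kone" and B: "B \<noteq> kone"
      have p1: "Fm (A,x) \<otimes>\<^bsub>?L\<^esub> Fm (B,y) = (f' (kmult A B), (f'' x \<otimes> inv (f'' y)) \<otimes> (?a A \<otimes> ?a B))"
        using A B x y Fm fne[OF B] al fx fy fh G1[of "inv (f'' x)" "inv (f'' y)" "?a A" "?a B"]
        by (simp add: LM_mult)
      have p2: "Fm (B,y) \<otimes>\<^bsub>?L\<^esub> Fm (A,x) = (f' (kmult A B), (f'' y \<otimes> inv (f'' x)) \<otimes> (?a A \<otimes> ?a B))"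
        using A B x y Fm fne[OF A] al fx fy fh G1[of "inv (f'' y)" "inv (f'' x)" "?a B" "?a A"]
        by (simp add: LM_mult kmult_comm m_comm)
      show ?thesis
      proof (cases "A = B")
        case True
        have "Fm ((A,x) \<otimes>\<^bsub>?L\<^esub> (B,y)) = Fm (B,y) \<otimes>\<^bsub>?L\<^esub> Fm (A,x)"
          using True p2 A x y Fm f1 al fx fy by (simp add: LM_mult m_comm)
        then show ?thesis by simp
      next
        case False
        have C: "kmult A B \<noteq> kone" using False kmult_eq_kone by blast
        have "Fm ((A,x) \<otimes>\<^bsub>?L\<^esub> (B,y)) = Fm (A,x) \<otimes>\<^bsub>?L\<^esub> Fm (B,y)"
          using p1 A B C x y Fm al fx fy by (simp add: LM_mult inv_mult m_comm)
        then show ?thesis by simp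
      qed
    qed
    then show ?thesis using Ax By by simp
  qed
  ultimately show "Fminus M f' f'' u v \<in> Half (LM M)"
    unfolding Half_def half_aut_def Fm_def by (simp add: Fminus_def)
qed
end


definition Tset :: "('a, 'b) monoid_scheme \<Rightarrow> 'a set" where
  "Tset G = {x \<in> carrier G. x \<otimes>\<^bsub>G\<^esub> x = \<one>\<^bsub>G\<^esub>}"

context hlm begin

lemma card_Half:
  assumes fin: "finite (carrier M)" and z: "z \<in> carrier M" "z \<otimes> z \<noteq> \<one>"
  shows "Half (LM M) =
           {Fplus M f' f'' u v | f' f'' u v. f' \<in> Aut klein \<and> f'' \<in> Aut M \<and>
               u \<in> carrier M \<and> v \<in> carrier M \<and> u \<otimes> u = \<one> \<and> v \<otimes> v = \<one>}
         \<union> {Fminus M f' f'' u v | f' f'' u v. f' \<in> Aut klein \<and> f'' \<in> Aut M \<and>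
               u \<in> carrier M \<and> v \<in> carrier M \<and> u \<otimes> u = \<one> \<and> v \<otimes> v = \<one>}" (is "_ = ?A \<union> ?B")
    and "card (Half (LM M)) = 2 * card (Aut klein) * card (Aut M) * card (Tset M) * card (Tset M)"
proof -
  let ?T = "Tset M"
  define S where "S = Aut klein \<times> Aut M \<times> ?T \<times> ?T"
  define Gp where "Gp = (\<lambda>(f', f'', u, v). Fplus M f' f'' u v)"
  define Gm where "Gm = (\<lambda>(f', f'', u, v). Fminus M f' f'' u v)"
  have e1: "{Fplus M f' f'' u v | f' f'' u v. f' \<in> Aut klein \<and> f'' \<in> Aut M \<and>
               u \<in> carrier M \<and> v \<in> carrier M \<and> u \<otimes> u = \<one> \<and> v \<otimes> v = \<one>} = Gp ` S"
    by (auto simp: Gp_def S_def Tset_def image_iff) blast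
  have e2: "{Fminus M f' f'' u v | f' f'' u v. f' \<in> Aut klein \<and> f'' \<in> Aut M \<and>
               u \<in> carrier M \<and> v \<in> carrier M \<and> u \<otimes> u = \<one> \<and> v \<otimes> v = \<one>} = Gm ` S"
    by (auto simp: Gm_def S_def Tset_def image_iff) blast
  have H: "Half (LM M) = Gp ` S \<union> Gm ` S"
  proof
    show "Half (LM M) \<subseteq> Gp ` S \<union> Gm ` S"
    proof
      fix f assume "f \<in> Half (LM M)"
      from half_cases[OF this z] show "f \<in> Gp ` S \<union> Gm ` S"
        unfolding e1[symmetric] e2[symmetric] by blast
    qed
    show "Gp ` S \<union> Gm ` S \<subseteq> Half (LM M)"
      using F_Half[OF fin] by (auto simp: Gp_def Gm_def S_def Tset_def)
  qed
  then show "Half (LM M) = ?A \<union> ?B" using e1 e2 by simp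
  have Fpv: "Fplus M f' f'' u v (A,x) = (f' A, f'' x \<otimes> alpha M u v A)" if "x \<in> carrier M" for f' f'' u v A x
    using that by (simp add: Fplus_def LM_carrier)
  have Fmv: "Fminus M f' f'' u v (A,x) = (if A = kone then (kone, f'' x) else (f' A, f'' (inv x) \<otimes> alpha M u v A))"
    if "x \<in> carrier M" for f' f'' u v A x
    using that by (simp add: Fminus_def LM_carrier)
  have extK: "f \<in> Aut klein \<Longrightarrow> f \<in> extensional UNIV" for f by simp
  have extM: "f \<in> Aut M \<Longrightarrow> f \<in> extensional (carrier M)" for f by (simp add: Aut_def)
  have homone: "f \<in> Aut M \<Longrightarrow> f \<one> = \<one>" for f by (rule group_hom.hom_one[OF Aut_gh])
  have homC: "f \<in> Aut M \<Longrightarrow> x \<in> carrier M \<Longrightarrow> f x \<in> carrier M" for f x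
    by (rule group_hom.hom_closed[OF Aut_gh])
  have injp: "inj_on Gp S"
  proof (rule inj_onI)
    fix p q assume p: "p \<in> S" and q: "q \<in> S" and e: "Gp p = Gp q"
    obtain f1 g1 u1 v1 where p': "p = (f1,g1,u1,v1)" by (cases p) auto
    obtain f2 g2 u2 v2 where q': "q = (f2,g2,u2,v2)" by (cases q) auto
    have P: "f1 \<in> Aut klein" "g1 \<in> Aut M" "u1 \<in> carrier M" "v1 \<in> carrier M"
      and Q: "f2 \<in> Aut klein" "g2 \<in> Aut M" "u2 \<in> carrier M" "v2 \<in> carrier M"
      using p q p' q' by (auto simp: S_def Tset_def)
    have e': "Fplus M f1 g1 u1 v1 (A,x) = Fplus M f2 g2 u2 v2 (A,x)" for A x
      using e p' q' by (simp add: Gp_def)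
    have "f1 A = f2 A" for A using e'[of A \<one>] Fpv by simp
    then have "f1 = f2" by blast
    moreover have "u1 = u2" using e'[of ka \<one>] Fpv homone[OF P(2)] homone[OF Q(2)] P Q by simp
    moreover have "v1 = v2" using e'[of kb \<one>] Fpv homone[OF P(2)] homone[OF Q(2)] P Q by simp
    moreover have "g1 = g2"
    proof (rule extensionalityI[OF extM[OF P(2)] extM[OF Q(2)]])
      fix x assume x: "x \<in> carrier M"
      show "g1 x = g2 x" using e'[of kone x] Fpv[OF x] homC P Q x by simp
    qed
    ultimately show "p = q" using p' q' by simp
  qed
  have injm: "inj_on Gm S"
  proof (rule inj_onI)
    fix p q assume p: "p \<in> S" and q: "q \<in> S" and e: "Gm p = Gm q"
    obtain f1 g1 u1 v1 where p': "p = (f1,g1,u1,v1)" by (cases p) auto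
    obtain f2 g2 u2 v2 where q': "q = (f2,g2,u2,v2)" by (cases q) auto
    have P: "f1 \<in> Aut klein" "g1 \<in> Aut M" "u1 \<in> carrier M" "v1 \<in> carrier M"
      and Q: "f2 \<in> Aut klein" "g2 \<in> Aut M" "u2 \<in> carrier M" "v2 \<in> carrier M"
      using p q p' q' by (auto simp: S_def Tset_def)
    have e': "Fminus M f1 g1 u1 v1 (A,x) = Fminus M f2 g2 u2 v2 (A,x)" for A x
      using e p' q' by (simp add: Gm_def)
    have "f1 A = f2 A" for A
    proof (cases "A = kone")
      case True then show ?thesis using Autk_one[OF P(1)] Autk_one[OF Q(1)] by simp
    next
      case False then show ?thesis using e'[of A \<one>] Fmv by simp
    qed
    then have "f1 = f2" by blast
    moreover have "u1 = u2" using e'[of ka \<one>] Fmv homone[OF P(2)] homone[OF Q(2)] P Q by simp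
    moreover have "v1 = v2" using e'[of kb \<one>] Fmv homone[OF P(2)] homone[OF Q(2)] P Q by simp
    moreover have "g1 = g2"
    proof (rule extensionalityI[OF extM[OF P(2)] extM[OF Q(2)]])
      fix x assume x: "x \<in> carrier M"
      show "g1 x = g2 x" using e'[of kone x] Fmv[OF x] by simp
    qed
    ultimately show "p = q" using p' q' by simp
  qed
  have disj: "Gp ` S \<inter> Gm ` S = {}"
  proof (rule ccontr)
    assume "Gp ` S \<inter> Gm ` S \<noteq> {}"
    then obtain p q where p: "p \<in> S" and q: "q \<in> S" and e: "Gp p = Gm q" by blast
    obtain f1 g1 u1 v1 where p': "p = (f1,g1,u1,v1)" by (cases p) auto
    obtain f2 g2 u2 v2 where q': "q = (f2,g2,u2,v2)" by (cases q) auto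
    have P: "f1 \<in> Aut klein" "g1 \<in> Aut M" "u1 \<in> carrier M" "v1 \<in> carrier M"
      and Q: "f2 \<in> Aut klein" "g2 \<in> Aut M" "u2 \<in> carrier M" "v2 \<in> carrier M"
      using p q p' q' by (auto simp: S_def Tset_def)
    interpret g1: group_hom M M g1 using Aut_gh P by blast
    have e': "Fplus M f1 g1 u1 v1 (A,x) = Fminus M f2 g2 u2 v2 (A,x)" for A x
      using e p' q' by (simp add: Gp_def Gm_def)
    have gg: "g1 x = g2 x" if "x \<in> carrier M" for x using e'[of kone x] Fpv[OF that] Fmv[OF that] P that by simp
    have uu: "u1 = u2" using e'[of ka \<one>] Fpv Fmv homone[OF P(2)] homone[OF Q(2)] P Q by simp
    have "g1 z \<otimes> u1 = inv (g1 z) \<otimes> u1" using e'[of ka z] Fpv[OF z(1)] Fmv[OF z(1)] gg z uu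
      by (simp add: g1.hom_inv group_hom.hom_inv[OF Aut_gh[OF Q(2)] z(1)])
    then have "g1 z = inv (g1 z)" using P z by (metis g1.hom_closed inv_closed r_cancel)
    then have "g1 (z \<otimes> z) = g1 \<one>" using z by (metis A4 g1.hom_closed g1.hom_mult g1.hom_one)
    then have "z \<otimes> z = \<one>" using Aut_inj[OF P(2)] z by (simp add: inj_on_def)
    then show False using z by simp
  qed
  have finT: "finite ?T" using fin by (simp add: Tset_def)
  have finAK: "finite (Aut klein)" by simp
  have finAM: "finite (Aut M)"
  proof (rule finite_subset)
    show "Aut M \<subseteq> carrier M \<rightarrow>\<^sub>E carrier M" using homC extM by (auto simp: PiE_def Pi_def)
    show "finite (carrier M \<rightarrow>\<^sub>E carrier M)" using fin by (simp add: finite_PiE)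
  qed
  have finS: "finite S" using finT finAK finAM by (simp add: S_def)
  have cS: "card S = card (Aut klein) * card (Aut M) * card ?T * card ?T"
    by (simp add: S_def card_cartesian_product)
  have "card (Half (LM M)) = card (Gp ` S) + card (Gm ` S)"
    using H disj finS by (simp add: card_Un_disjoint)
  also have "\<dots> = 2 * card S" using card_image[OF injp] card_image[OF injm] by simp
  finally show "card (Half (LM M)) = 2 * card (Aut klein) * card (Aut M) * card ?T * card ?T"
    using cS by simp
qed

end


lemma exp_z: fixes M (structure) assumes "group M" "2 < group_exponent M" shows "\<exists>z\<in>carrier M. z \<otimes> z \<noteq> \<one>"
proof (rule ccontr)
  interpret group M by fact
  assume "\<not> (\<exists>z\<in>carrier M. z \<otimes> z \<noteq> \<one>)"
  then have "\<forall>x\<in>carrier M. x [^] (2::nat) = \<one>" by (simp add: numeral_2_eq_2)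
  then have "group_exponent M \<le> 2" unfolding group_exponent_def by (intro Least_le) simp
  then show False using assms by simp
qed

lemma odd_T: fixes G (structure) assumes "group G" "odd (card (carrier G))" shows "Tset G = {\<one>}"
proof -
  interpret group G by fact
  have "x = \<one>" if x: "x \<in> carrier G" "x \<otimes> x = \<one>" for x
  proof (rule ccontr)
    assume ne: "x \<noteq> \<one>"
    have "x [^] (2::nat) = \<one>" using x by (simp add: numeral_2_eq_2)
    then have d: "ord x dvd 2" using pow_eq_id x by blast
    have "ord x \<noteq> 1" using ord_eq_1 x ne by blast
    moreover have "ord x \<noteq> 0"
    proof
      assume "ord x = 0" then show False using d by simp
    qed
    moreover have "ord x \<le> 2" using d by (simp add: dvd_imp_le)
    ultimately have "ord x = 2" by arith
    then have "2 dvd card (carrier G)" using ord_dvd_group_order[OF x(1)] by (simp add: order_def)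
    then show False using assms by simp
  qed
  then show ?thesis by (auto simp: Tset_def)
qed

lemma iso_T:
  assumes "group M" "group G" "h \<in> iso M G"
  shows "card (Tset M) = card (Tset G)"
proof -
  interpret M: group M by fact
  interpret G: group G by fact
  interpret H: group_hom M G h using assms by (simp add: group_hom_def group_hom_axioms_def iso_def)
  have inj: "inj_on h (carrier M)" and sur: "h ` carrier M = carrier G"
    using assms(3) by (auto simp: iso_def bij_betw_def)
  have "h ` Tset M = Tset G"
  proof
    show "h ` Tset M \<subseteq> Tset G" by (auto simp: Tset_def simp flip: H.hom_mult)
    show "Tset G \<subseteq> h ` Tset M"
    proof
      fix y assume y: "y \<in> Tset G"
      then obtain x where x: "x \<in> carrier M" "y = h x" using sur by (auto simp: Tset_def)
      then have "h (x \<otimes>\<^bsub>M\<^esub> x) = h \<one>\<^bsub>M\<^esub>" using y by (simp add: Tset_def)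
      then have "x \<otimes>\<^bsub>M\<^esub> x = \<one>\<^bsub>M\<^esub>" using inj x by (simp add: inj_on_def)
      then show "y \<in> h ` Tset M" using x by (auto simp: Tset_def)
    qed
  qed
  moreover have "inj_on h (Tset M)" using inj by (rule inj_on_subset) (auto simp: Tset_def)
  ultimately show ?thesis using card_image by metis
qed

lemma zmod2: assumes "1 \<le> k" "0 \<le> x" "x < int (2 * k)"
  shows "(x + x) mod int (2 * k) = 0 \<longleftrightarrow> x = 0 \<or> x = int k"
proof
  assume "(x + x) mod int (2 * k) = 0"
  then obtain m where m: "x + x = int (2 * k) * m" by (auto simp: mod_eq_0_iff_dvd dvd_def)
  then have xm: "x = int k * m" by simp
  have kp: "0 < int k" using assms by simp
  have "0 \<le> int k * m" using xm assms by simp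
  then have "0 \<le> m" using kp by (simp add: zero_le_mult_iff)
  moreover have "m < 2"
  proof -
    have e2: "int (2 * k) = int k * 2" by simp
    have m2: "int k * m < int k * 2" using assms(3) xm e2 by metis
    show ?thesis by (metis mult_less_cancel_left_pos kp m2)
  qed
  ultimately have "m = 0 \<or> m = 1" by arith
  then show "x = 0 \<or> x = int k" using xm by auto
next
  assume "x = 0 \<or> x = int k"
  then show "(x + x) mod int (2 * k) = 0" by auto
qed

lemma T_prod:
  assumes "\<forall>j<s. i j \<ge> (1::nat)"
  shows "Tset (product_group {..<s} (\<lambda>j. integer_mod_group (2 * i j))) = (\<Pi>\<^sub>E j\<in>{..<s}. {0, int (i j)})"
proof -
  have nz: "2 * i j \<noteq> 0" if "j < s" for j using assms that by auto
  show ?thesis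
  proof (rule Set.set_eqI)
    fix x
    show "x \<in> Tset (product_group {..<s} (\<lambda>j. integer_mod_group (2 * i j))) \<longleftrightarrow> x \<in> (\<Pi>\<^sub>E j\<in>{..<s}. {0, int (i j)})"
    proof
      assume x: "x \<in> Tset (product_group {..<s} (\<lambda>j. integer_mod_group (2 * i j)))"
      then have xc0: "x \<in> (\<Pi>\<^sub>E j\<in>{..<s}. carrier (integer_mod_group (2 * i j)))"
        by (simp add: Tset_def)
      have xc: "x \<in> (\<Pi>\<^sub>E j\<in>{..<s}. {0..<int (2 * i j)})"
      proof -
        have "carrier (integer_mod_group (2 * i j)) = {0..<int (2 * i j)}" if "j \<in> {..<s}" for j
          using nz[of j] that by (simp add: carrier_integer_mod_group)
        then have "(\<Pi>\<^sub>E j\<in>{..<s}. carrier (integer_mod_group (2 * i j))) = (\<Pi>\<^sub>E j\<in>{..<s}. {0..<int (2 * i j)})"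
          by (rule PiE_cong)
        then show ?thesis using xc0 by simp
      qed
      have eq: "(\<lambda>j\<in>{..<s}. (x j + x j) mod int (2 * i j)) = (\<lambda>j\<in>{..<s}. 0)"
        using x by (simp add: Tset_def)
      have "x j = 0 \<or> x j = int (i j)" if j: "j < s" for j
      proof -
        have m0: "(x j + x j) mod int (2 * i j) = 0" using fun_cong[OF eq, of j] j by simp
        have b: "0 \<le> x j" "x j < int (2 * i j)" using xc j by (auto simp: PiE_def Pi_def)
        have k1: "1 \<le> i j" using assms j by blast
        show ?thesis using zmod2[OF k1 b] m0 by blast
      qed
      then show "x \<in> (\<Pi>\<^sub>E j\<in>{..<s}. {0, int (i j)})" using xc by (auto simp: PiE_def Pi_def)
    next
      assume x: "x \<in> (\<Pi>\<^sub>E j\<in>{..<s}. {0, int (i j)})"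
      have xc: "x \<in> (\<Pi>\<^sub>E j\<in>{..<s}. carrier (integer_mod_group (2 * i j)))"
        using x nz assms by (auto simp: carrier_integer_mod_group PiE_def Pi_def)
      have "(\<lambda>j\<in>{..<s}. (x j + x j) mod int (2 * i j)) = (\<lambda>j\<in>{..<s}. 0)"
      proof (rule restrict_ext)
        fix j assume j: "j \<in> {..<s}"
        then have "x j = 0 \<or> x j = int (i j)" using x by (auto simp: PiE_def Pi_def)
        then show "(x j + x j) mod int (2 * i j) = 0" by auto
      qed
      then show "x \<in> Tset (product_group {..<s} (\<lambda>j. integer_mod_group (2 * i j)))"
        using xc by (simp add: Tset_def)
    qed
  qed
qed

lemma card_T_b:
  assumes "\<forall>j<s. i j \<ge> (1::nat)" and M1: "group M1" "odd (card (carrier M1))"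
  shows "card (Tset (product_group {..<s} (\<lambda>j. integer_mod_group (2 * i j)) \<times>\<times> M1)) = 2 ^ s"
proof -
  let ?P = "product_group {..<s} (\<lambda>j. integer_mod_group (2 * i j))"
  have "Tset (?P \<times>\<times> M1) = Tset ?P \<times> Tset M1"
  proof -
    have key: "(a,b) \<in> Tset (?P \<times>\<times> M1) \<longleftrightarrow> (a,b) \<in> Tset ?P \<times> Tset M1" for a b
      by (simp add: Tset_def conj_ac)
    show ?thesis using key by (simp add: set_eq_iff split_paired_all)
  qed
  also have "\<dots> = Tset ?P \<times> {\<one>\<^bsub>M1\<^esub>}" using odd_T[OF M1] by simp
  finally have "card (Tset (?P \<times>\<times> M1)) = card (Tset ?P)" by (simp add: card_cartesian_product)
  also have "\<dots> = (\<Prod>j<s. card {0, int (i j)})" using T_prod[OF assms(1)] by (simp add: card_PiE)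
  also have "\<dots> = (\<Prod>j<s. 2)" using assms(1) by (intro prod.cong) auto
  finally show ?thesis by simp
qed


theorem theorem4p13:
  fixes M :: "('a, 'b) monoid_scheme"
  assumes "comm_group M" and "finite (carrier M)" and "group_exponent M > 2"
  shows "Half (LM M) =
           {Fplus M f' f'' u v | f' f'' u v. f' \<in> Aut klein \<and> f'' \<in> Aut M \<and>
               u \<in> carrier M \<and> v \<in> carrier M \<and> u \<otimes>\<^bsub>M\<^esub> u = \<one>\<^bsub>M\<^esub> \<and> v \<otimes>\<^bsub>M\<^esub> v = \<one>\<^bsub>M\<^esub>}
         \<union> {Fminus M f' f'' u v | f' f'' u v. f' \<in> Aut klein \<and> f'' \<in> Aut M \<and>
               u \<in> carrier M \<and> v \<in> carrier M \<and> u \<otimes>\<^bsub>M\<^esub> u = \<one>\<^bsub>M\<^esub> \<and> v \<otimes>\<^bsub>M\<^esub> v = \<one>\<^bsub>M\<^esub>}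
         \<and> (odd (card (carrier M)) \<longrightarrow>
              card (Half (LM M)) = 2 * card (Aut klein) * card (Aut M))
         \<and> (\<forall>(s::nat) (i::nat \<Rightarrow> nat) (M1 :: ('c, 'd) monoid_scheme).
              even (card (carrier M)) \<and> s \<ge> 1 \<and> (\<forall>j<s. i j \<ge> 1) \<and>
              group M1 \<and> finite (carrier M1) \<and> odd (card (carrier M1)) \<and>
              M \<cong> (product_group {..<s} (\<lambda>j. integer_mod_group (2 * i j)) \<times>\<times> M1) \<longrightarrow>
              card (Half (LM M)) = 2 ^ (2 * s + 1) * card (Aut klein) * card (Aut M))"
proof -
  interpret hlm M using assms(1) by (simp add: hlm_def)
  have grM: "group M" using assms(1) by (simp add: comm_group_def group_def)
  obtain z where z: "z \<in> carrier M" "z \<otimes>\<^bsub>M\<^esub> z \<noteq> \<one>\<^bsub>M\<^esub>"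
    using exp_z[OF grM assms(3)] by blast
  note H = card_Half[OF assms(2) z]
  show ?thesis
  proof (rule conjI[OF H(1)], intro conjI)
    show "odd (card (carrier M)) \<longrightarrow> card (Half (LM M)) = 2 * card (Aut klein) * card (Aut M)"
    proof
      assume "odd (card (carrier M))"
      then have "Tset M = {\<one>\<^bsub>M\<^esub>}" using odd_T[OF grM] by simp
      then show "card (Half (LM M)) = 2 * card (Aut klein) * card (Aut M)" using H(2) by simp
    qed
    show "\<forall>(s::nat) (i::nat \<Rightarrow> nat) (M1 :: ('c, 'd) monoid_scheme).
              even (card (carrier M)) \<and> s \<ge> 1 \<and> (\<forall>j<s. i j \<ge> 1) \<and>
              group M1 \<and> finite (carrier M1) \<and> odd (card (carrier M1)) \<and>
              M \<cong> (product_group {..<s} (\<lambda>j. integer_mod_group (2 * i j)) \<times>\<times> M1) \<longrightarrow>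
              card (Half (LM M)) = 2 ^ (2 * s + 1) * card (Aut klein) * card (Aut M)"
    proof (intro allI impI, elim conjE)
      fix s :: nat and i :: "nat \<Rightarrow> nat" and M1 :: "('c, 'd) monoid_scheme"
      assume i: "\<forall>j<s. i j \<ge> 1" and M1: "group M1" "odd (card (carrier M1))"
        and iso: "M \<cong> (product_group {..<s} (\<lambda>j. integer_mod_group (2 * i j)) \<times>\<times> M1)"
      let ?G = "product_group {..<s} (\<lambda>j. integer_mod_group (2 * i j)) \<times>\<times> M1"
      obtain h where h: "h \<in> iso M ?G" using iso by (auto simp: is_iso_def)
      have grG: "group ?G" using M1 by (intro DirProd_group product_group) simp_all
      have "card (Tset M) = 2 ^ s" using iso_T[OF grM grG h] card_T_b[OF i M1] by simp
      then show "card (Half (LM M)) = 2 ^ (2 * s + 1) * card (Aut klein) * card (Aut M)"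
        using H(2) by (simp add: power_add power_mult mult_ac power2_eq_square)
    qed
  qed
qed

end
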